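(* If $G$ is a graph and $v\in V(G)$, then $St_{dom}(G)\le St_{dom}(G-v)+1$.
   Context: A dominated coloring of a graph is a proper coloring in which every color class is dominated by at least one vertex, i.e. for each color class $C$ there is a vertex adjacent to every vertex of $C$; $\chi_{dom}(G)$ is the minimum number of colors in a dominated coloring. The dom-stability $St_{dom}(G)$ is the minimum number of vertices of $G$ whose removal changes the dominated chromatic number of $G$. *)

theory Defs
  imports Main "HOL-Library.Extended_Nat"
begin

definition is_graph :: "'a set \<Rightarrow> 'a set set \<Rightarrow> bool" where
  "is_graph V E \<longleftrightarrow> finite V \<and> (\<forall>e\<in>E. \<exists>u v. e = {u, v} \<and> u \<in> V \<and> v \<in> V \<and> u \<noteq> v)"

definition del_verts_V :: "'a set \<Rightarrow> 'a set \<Rightarrow> 'a set" where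
  "del_verts_V V S = V - S"

definition del_verts_E :: "'a set set \<Rightarrow> 'a set \<Rightarrow> 'a set set" where
  "del_verts_E E S = {e \<in> E. e \<inter> S = {}}"

definition dominated_coloring :: "'a set \<Rightarrow> 'a set set \<Rightarrow> ('a \<Rightarrow> nat) \<Rightarrow> nat \<Rightarrow> bool" where
  "dominated_coloring V E c k \<longleftrightarrow>
     (\<forall>v\<in>V. c v < k) \<and>
     (\<forall>u\<in>V. \<forall>v\<in>V. {u, v} \<in> E \<longrightarrow> c u \<noteq> c v) \<and>
     (\<forall>i<k. {v \<in> V. c v = i} \<noteq> {} \<longrightarrow>
        (\<exists>w\<in>V. \<forall>v\<in>V. c v = i \<longrightarrow> {w, v} \<in> E))"

text \<open>Dominated chromatic number; \<infinity> if no dominated coloring exists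
  (e.g. graph with an isolated vertex).\<close>
definition chi_dom :: "'a set \<Rightarrow> 'a set set \<Rightarrow> enat" where
  "chi_dom V E = Inf {enat k | k. \<exists>c. dominated_coloring V E c k}"

text \<open>Dom-stability: minimum number of vertices whose removal changes chi_dom;
  \<infinity> if no such vertex set exists.\<close>
definition st_dom :: "'a set \<Rightarrow> 'a set set \<Rightarrow> enat" where
  "st_dom V E = Inf {enat (card S) | S. S \<subseteq> V \<and>
      chi_dom (del_verts_V V S) (del_verts_E E S) \<noteq> chi_dom V E}"

end

theory Submission
  imports Defs
begin

lemma enat_Inf_in: "(A::enat set) \<noteq> {} \<Longrightarrow> Inf A \<in> A"
  unfolding Inf_enat_def by (auto intro: LeastI)

theorem mainTheorem12:
  fixes V :: "'a set" and E :: "'a set set" and v :: 'a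
  assumes "is_graph V E" and "v \<in> V"
  shows "st_dom V E \<le> st_dom (del_verts_V V {v}) (del_verts_E E {v}) + 1"
proof -
  let ?V = "del_verts_V V {v}" and ?E = "del_verts_E E {v}"
  define A where "A = {enat (card S) | S. S \<subseteq> ?V \<and>
      chi_dom (del_verts_V ?V S) (del_verts_E ?E S) \<noteq> chi_dom ?V ?E}"
  have fin: "finite V" using assms(1) unfolding is_graph_def by simp
  show ?thesis
  proof (cases "A = {}")
    case True
    have eqA: "st_dom ?V ?E = Inf A" unfolding st_dom_def A_def by (rule refl)
    have "Inf A = \<infinity>" using True by (simp add: Inf_enat_def)
    then have "st_dom ?V ?E = \<infinity>" using eqA by simp
    then show ?thesis by simp
  next
    case False
    then have "st_dom ?V ?E \<in> A" unfolding st_dom_def A_def by (rule enat_Inf_in)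
    then obtain S where S: "S \<subseteq> ?V" "chi_dom (del_verts_V ?V S) (del_verts_E ?E S) \<noteq> chi_dom ?V ?E"
      and st: "st_dom ?V ?E = enat (card S)" unfolding A_def by blast
    show ?thesis
    proof (cases "chi_dom ?V ?E = chi_dom V E")
      case False
      have "st_dom V E \<le> enat (card {v})" unfolding st_dom_def
      proof (rule Inf_lower)
        have "{v} \<subseteq> V" using assms(2) by simp
        then show "enat (card {v}) \<in> {enat (card S) | S. S \<subseteq> V \<and>
            chi_dom (del_verts_V V S) (del_verts_E E S) \<noteq> chi_dom V E}" using False by blast
      qed
      also have "\<dots> \<le> st_dom ?V ?E + 1" using st by (simp add: one_enat_def)
      finally show ?thesis .
    next
      case True
      have eqV: "del_verts_V ?V S = del_verts_V V (insert v S)"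
        unfolding del_verts_V_def by auto
      have eqE: "del_verts_E ?E S = del_verts_E E (insert v S)"
        unfolding del_verts_E_def by auto
      have sub: "insert v S \<subseteq> V" using S(1) assms(2) unfolding del_verts_V_def by auto
      have vS: "v \<notin> S" using S(1) unfolding del_verts_V_def by auto
      have finS: "finite S" using finite_subset[OF sub fin] by simp
      have "st_dom V E \<le> enat (card (insert v S))" unfolding st_dom_def
      proof (rule Inf_lower)
        have "chi_dom (del_verts_V V (insert v S)) (del_verts_E E (insert v S)) \<noteq> chi_dom V E"
          using True S(2) unfolding eqV eqE by simp
        then show "enat (card (insert v S)) \<in> {enat (card S) | S. S \<subseteq> V \<and>
            chi_dom (del_verts_V V S) (del_verts_E E S) \<noteq> chi_dom V E}" using sub by blast
      qed
      also have "\<dots> = st_dom ?V ?E + 1" using st vS finS by (simp add: one_enat_def)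
      finally show ?thesis .
    qed
  qed
qed

end
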